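(* Let $\alpha,\beta$ be relatively prime positive integers and $n$ a positive integer with $s=s(n)>2$. If $(b,a)$ is $n$-good, then $a\le(\beta-1)g_s+\alpha b$.
   Context: The $(\alpha,\beta)$-walk $w_k(a_1,a_2)$ for positive integers $a_1,a_2$ is given by $w_1=a_1$, $w_2=a_2$, $w_{k+2}=\alpha w_{k+1}+\beta w_k$ ($k\ge1$). For a positive integer $n$, $s(n;a_1,a_2)$ is the (largest) index $s$ with $w_s(a_1,a_2)=n$ ($-\infty$ if none), and $s(n)=\max_{a_1,a_2\ge1}s(n;a_1,a_2)$. A pair $(a_1,a_2)$ with $a_1,a_2\ge1$ is $n$-good if $s(n;a_1,a_2)=s(n)$. The sequence $g_k$: $g_1=1$, $g_2=\alpha$, $g_{k+2}=\alpha g_{k+1}+\beta g_k$ for $k\ge1$. *)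

theory Defs
  imports Main
begin

text \<open>The (alpha,beta)-walk, 1-indexed: walk al be a1 a2 k = w_k(a1,a2) for k >= 1
  (index 0 is unused and set to 0).\<close>
fun walk :: "nat \<Rightarrow> nat \<Rightarrow> nat \<Rightarrow> nat \<Rightarrow> nat \<Rightarrow> nat" where
  "walk al be a1 a2 0 = 0"
| "walk al be a1 a2 (Suc 0) = a1"
| "walk al be a1 a2 (Suc (Suc 0)) = a2"
| "walk al be a1 a2 (Suc (Suc (Suc k))) =
     al * walk al be a1 a2 (Suc (Suc k)) + be * walk al be a1 a2 (Suc k)"

fun gseq :: "nat \<Rightarrow> nat \<Rightarrow> nat \<Rightarrow> nat" where
  "gseq al be 0 = 0"
| "gseq al be (Suc 0) = 1"
| "gseq al be (Suc (Suc 0)) = al"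
| "gseq al be (Suc (Suc (Suc k))) =
     al * gseq al be (Suc (Suc k)) + be * gseq al be (Suc k)"

text \<open>s(n;a1,a2): the largest index s >= 1 with w_s = n; the value -infinity
  (no such index) is encoded as 0, which is never a valid index.\<close>
definition sidx :: "nat \<Rightarrow> nat \<Rightarrow> nat \<Rightarrow> nat \<Rightarrow> nat \<Rightarrow> nat" where
  "sidx al be n a1 a2 =
     (let S = {k. 1 \<le> k \<and> walk al be a1 a2 k = n} in if S = {} then 0 else Max S)"

definition smax :: "nat \<Rightarrow> nat \<Rightarrow> nat \<Rightarrow> nat" where
  "smax al be n = Max {sidx al be n a1 a2 | a1 a2. 1 \<le> a1 \<and> 1 \<le> a2}"

definition good :: "nat \<Rightarrow> nat \<Rightarrow> nat \<Rightarrow> nat \<Rightarrow> nat \<Rightarrow> bool" where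
  "good al be n a1 a2 \<longleftrightarrow> 1 \<le> a1 \<and> 1 \<le> a2 \<and> sidx al be n a1 a2 = smax al be n"

end

theory Submission
  imports Defs "HOL-Number_Theory.Number_Theory"
begin

lemma gseq_rec: "gseq al be (Suc (Suc k)) = al * gseq al be (Suc k) + be * gseq al be k"
  by (cases k) auto

lemma walk_formula:
  "walk al be a1 a2 (Suc (Suc k)) = be * gseq al be k * a1 + gseq al be (Suc k) * a2"
proof -
  have "walk al be a1 a2 (Suc (Suc k)) = be * gseq al be k * a1 + gseq al be (Suc k) * a2
      \<and> walk al be a1 a2 (Suc (Suc (Suc k))) = be * gseq al be (Suc k) * a1 + gseq al be (Suc (Suc k)) * a2"
  proof (induction k)
    case 0 then show ?case by simp
  next
    case (Suc k)
    let ?g = "gseq al be" and ?w = "walk al be a1 a2"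
    have A: "?w (Suc (Suc k)) = be * ?g k * a1 + ?g (Suc k) * a2"
     and B: "?w (Suc (Suc (Suc k))) = be * ?g (Suc k) * a1 + ?g (Suc (Suc k)) * a2" using Suc by auto
    have "?w (Suc (Suc (Suc (Suc k)))) = al * ?w (Suc (Suc (Suc k))) + be * ?w (Suc (Suc k))" by simp
    also have "\<dots> = al * (be * ?g (Suc k) * a1 + ?g (Suc (Suc k)) * a2) + be * (be * ?g k * a1 + ?g (Suc k) * a2)"
      using A B by simp
    also have "\<dots> = be * ?g (Suc (Suc k)) * a1 + ?g (Suc (Suc (Suc k))) * a2"
      unfolding gseq_rec[of al be "Suc k"] gseq_rec[of al be k] by (simp add: algebra_simps)
    finally show ?case using B by simp
  qed
  then show ?thesis by blast
qed

lemma walk_pos: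
  assumes "0 < al" "0 < be" "1 \<le> a1" "1 \<le> a2"
  shows "walk al be a1 a2 (Suc k) \<ge> k \<and> walk al be a1 a2 (Suc k) \<ge> 1"
proof (induction k rule: less_induct)
  case (less k)
  show ?case
  proof (cases k)
    case 0 then show ?thesis using assms by simp
  next
    case (Suc j)
    show ?thesis
    proof (cases j)
      case 0 then show ?thesis using assms Suc by simp
    next
      case (Suc i)
      have h1: "walk al be a1 a2 (Suc (Suc i)) \<ge> Suc i \<and> walk al be a1 a2 (Suc (Suc i)) \<ge> 1"
        using less[of "Suc i"] \<open>k = Suc j\<close> Suc by simp
      have h2: "walk al be a1 a2 (Suc i) \<ge> 1"
        using less[of i] \<open>k = Suc j\<close> Suc by simp
      have "al * walk al be a1 a2 (Suc (Suc i)) \<ge> walk al be a1 a2 (Suc (Suc i))"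
        using assms by simp
      moreover have "be * walk al be a1 a2 (Suc i) \<ge> 1"
        using assms h2 by (metis One_nat_def Suc_leI mult_le_mono nat_mult_1)
      ultimately have "al * walk al be a1 a2 (Suc (Suc i)) + be * walk al be a1 a2 (Suc i) \<ge> Suc (Suc i)"
        using h1 by linarith
      then show ?thesis using \<open>k = Suc j\<close> Suc by simp
    qed
  qed
qed

lemma S_sub:
  assumes "0 < al" "0 < be" "1 \<le> a1" "1 \<le> a2"
  shows "{k. 1 \<le> k \<and> walk al be a1 a2 k = n} \<subseteq> {..Suc n}"
proof
  fix k assume "k \<in> {k. 1 \<le> k \<and> walk al be a1 a2 k = n}"
  then obtain j where "k = Suc j" "walk al be a1 a2 (Suc j) = n"
    by (metis (mono_tags, lifting) Suc_le_D mem_Collect_eq One_nat_def)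
  then show "k \<in> {..Suc n}" using walk_pos[OF assms, of j] by simp
qed

lemma sidx_le:
  assumes "0 < al" "0 < be" "1 \<le> a1" "1 \<le> a2"
  shows "sidx al be n a1 a2 \<le> Suc n"
proof -
  have f: "finite {k. 1 \<le> k \<and> walk al be a1 a2 k = n}"
    using S_sub[OF assms] finite_subset by blast
  show ?thesis unfolding sidx_def Let_def
    using S_sub[OF assms, of n] f by (auto intro!: Max.boundedI)
qed

lemma sidx_ge:
  assumes "0 < al" "0 < be" "1 \<le> a1" "1 \<le> a2" "1 \<le> k" "walk al be a1 a2 k = n"
  shows "k \<le> sidx al be n a1 a2"
proof -
  have f: "finite {k. 1 \<le> k \<and> walk al be a1 a2 k = n}"
    using S_sub[OF assms(1-4)] finite_subset by blast
  show ?thesis unfolding sidx_def Let_def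
    using f assms(5,6) by (auto intro!: Max_ge)
qed

lemma sidx_walk:
  assumes "sidx al be n a1 a2 = s" "0 < s" "0 < al" "0 < be" "1 \<le> a1" "1 \<le> a2"
  shows "walk al be a1 a2 s = n"
proof -
  let ?S = "{k. 1 \<le> k \<and> walk al be a1 a2 k = n}"
  have f: "finite ?S"
    using S_sub[OF assms(3-6)] finite_subset by blast
  have ne: "?S \<noteq> {}" using assms(1,2) unfolding sidx_def Let_def by (auto split: if_splits)
  have "sidx al be n a1 a2 = Max ?S" using ne unfolding sidx_def Let_def by (rule if_not_P)
  then have "s = Max ?S" using assms(1) by simp
  then have "s \<in> ?S" using Max_in[OF f ne] by simp
  then show ?thesis by simp
qed

lemma smax_ge:
  assumes "0 < al" "0 < be" "1 \<le> a1" "1 \<le> a2"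
  shows "sidx al be n a1 a2 \<le> smax al be n"
proof -
  let ?T = "{sidx al be n a1 a2 | a1 a2. 1 \<le> a1 \<and> 1 \<le> a2}"
  have "?T \<subseteq> {..Suc n}" using sidx_le[OF assms(1,2)] by auto
  then have "finite ?T" using finite_subset by blast
  then show ?thesis unfolding smax_def using assms by (auto intro!: Max_ge)
qed

lemma gseq_coprime:
  assumes "coprime al be"
  shows "coprime (gseq al be (Suc k)) be"
proof (induction k rule: less_induct)
  case (less k)
  show ?case
  proof (cases k)
    case 0 then show ?thesis by simp
  next
    case (Suc j)
    show ?thesis
    proof (cases j)
      case 0 then show ?thesis using assms Suc by simp
    next
      case (Suc i)
      have "coprime (gseq al be (Suc (Suc i))) be" using less[of "Suc i"] \<open>k = Suc j\<close> Suc by simp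
      then have "coprime (al * gseq al be (Suc (Suc i))) be" using assms by simp
      then have "coprime (al * gseq al be (Suc (Suc i)) + be * gseq al be (Suc i)) be"
        by (metis coprime_iff_gcd_eq_1 gcd.commute gcd_add_mult add.commute mult.commute)
      then show ?thesis using \<open>k = Suc j\<close> Suc by simp
    qed
  qed
qed

theorem lemma2p6:
  fixes al be n a b :: nat
  assumes "0 < al" and "0 < be" and "coprime al be" and "0 < n"
    and "smax al be n > 2"
    and "good al be n b a"
  shows "a \<le> (be - 1) * gseq al be (smax al be n) + al * b"
proof (rule ccontr)
  define s where "s = smax al be n"
  assume "\<not> ?thesis"
  then have big: "a > (be - 1) * gseq al be s + al * b" unfolding s_def by simp
  define k where "k = s - 2"
  have sk: "s = Suc (Suc k)" using assms(5) unfolding k_def s_def by simp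
  have b1: "1 \<le> b" and a1: "1 \<le> a" and sb: "sidx al be n b a = s"
    using assms(6) unfolding good_def s_def by auto
  have "walk al be b a s = n" using sidx_walk[OF sb] sk assms b1 a1 by simp
  then have nEq: "n = be * gseq al be k * b + gseq al be (Suc k) * a"
    using walk_formula sk by simp
  define G where "G = gseq al be s"
  define H where "H = gseq al be (Suc k)"
  have GH: "G = al * H + be * gseq al be k" unfolding G_def H_def sk by (rule gseq_rec)
  have cop: "coprime (int G) (int be)" unfolding G_def sk using gseq_coprime[OF assms(3)]
    by (simp add: coprime_int_iff)
  define c where "c = int a - int al * int b"
  obtain u where u: "[int G * u = 1] (mod int be)"
    using cong_solve_coprime_int[OF cop] by blast
  define v where "v = (u * c) mod int be"
  have v0: "0 \<le> v" and v1: "v < int be" using assms(2) unfolding v_def by auto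
  have "[int G * v = int G * (u * c)] (mod int be)" unfolding v_def
    by (simp add: cong_def mod_mult_right_eq)
  moreover have "[int G * (u * c) = c] (mod int be)"
    using cong_scalar_right[OF u, of c] by (simp add: mult.assoc)
  ultimately have "[int G * v = c] (mod int be)" using cong_trans by blast
  then have dv: "int be dvd (c - int G * v)"
    by (metis cong_iff_dvd_diff cong_sym)
  then obtain x where x: "c - int G * v = int be * x" by blast
  have "int G * v \<le> int G * (int be - 1)" using v1 by (simp add: mult_left_mono)
  moreover have "int a > int (be - 1) * int G + int al * int b" using big unfolding G_def
    by (metis of_nat_add of_nat_mult of_nat_less_iff)
  ultimately have "c - int G * v > 0" unfolding c_def using assms(2) by (simp add: of_nat_diff algebra_simps)
  then have xpos: "x > 0" using x assms(2) by (simp add: zero_less_mult_iff)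
  define y where "y = int b + int H * v"
  have ypos: "y \<ge> 1" proof -
    have "int H * v \<ge> 0" using v0 by simp
    then show ?thesis unfolding y_def using b1 by linarith
  qed
  have key: "int be * int H * x + int G * y = int n"
  proof -
    have "int be * int H * x = int H * (c - int G * v)" using x by (simp add: algebra_simps)
    then have "int be * int H * x + int G * y = int H * c + int G * int b"
      unfolding y_def by (simp add: algebra_simps)
    also have "\<dots> = int n" unfolding c_def nEq GH H_def by (simp add: algebra_simps)
    finally show ?thesis .
  qed
  have "walk al be (nat x) (nat y) (Suc (Suc (Suc k))) = be * H * nat x + G * nat y"
    using walk_formula[of al be "nat x" "nat y" "Suc k"] unfolding H_def G_def sk by simp
  also have "\<dots> = n"
  proof -
    have "int (be * H * nat x + G * nat y) = int n" using key xpos ypos by simp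
    then show ?thesis by linarith
  qed
  finally have w: "walk al be (nat x) (nat y) (Suc s) = n" using sk by simp
  have "Suc s \<le> sidx al be n (nat x) (nat y)"
    using sidx_ge[OF assms(1,2) _ _ _ w] xpos ypos by simp
  also have "\<dots> \<le> s" unfolding s_def using smax_ge[OF assms(1,2)] xpos ypos by simp
  finally show False by simp
qed

end
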